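(* Let $\mathbb{F}$ be a finite field. For every $k\in\mathbb{N}$ there exists a CMSO formula $\mathrm{LinCom}(\langle Z\rangle,\langle Y^1\rangle,\dots,\langle Y^k\rangle)$ over $\Sigma_{\mathbb{F}}$ such that for every matrix $A$ over $\mathbb{F}$ and all virtual columns $\langle L\rangle,\langle J^1\rangle,\dots,\langle J^k\rangle$ of $\mathcal{S}(A)$ we have $\mathcal{S}(A)\models\mathrm{LinCom}(\langle L\rangle,\langle J^1\rangle,\dots,\langle J^k\rangle)$ if and only if $v(\langle L\rangle)\in\mathrm{span}(v(\langle J^1\rangle),\dots,v(\langle J^k\rangle))$.
   Context: $\Sigma_{\mathbb{F}}$ has unary symbols $R,C$ and binary symbols $\mathrm{Entry}_\alpha$ ($\alpha\in\mathbb{F}$). For a matrix $A$ with rows $r_1,\dots,r_m$, $\mathcal{S}(A)$ has universe rows $\cup$ columns, $R$ = rows, $C$ = columns, $\mathrm{Entry}_\alpha=\{(r,c):A(r,c)=\alpha\}$. CMSO is monadic second-order logic with predicates $\mathrm{mod}_{a,b}(X)$ meaning $|X|\equiv a\pmod b$. A virtual column of $\mathcal{S}(A)$ is a family $\langle Q\rangle=\{Q_\alpha\}_{\alpha\in\mathbb{F}}$ of pairwise disjoint sets of rows whose union is the set of all rows; its vector $v(\langle Q\rangle)\in\mathbb{F}^m$ has $i$-th coordinate $\alpha$ where $r_i\in Q_\alpha$. In formulas, a virtual column variable $\langle Z\rangle$ is an $\mathbb{F}$-indexed tuple of set variables $\{Z_\alpha\}_{\alpha\in\mathbb{F}}$.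 *)

theory Defs
  imports Main
begin

record ('u,'f) sigF_struct =
  univ :: "'u set"
  predR :: "'u \<Rightarrow> bool"
  predC :: "'u \<Rightarrow> bool"
  entry :: "'f \<Rightarrow> 'u \<Rightarrow> 'u \<Rightarrow> bool"

text \<open>The structure S(A) of an m x n matrix A (entries A i j for i < m, j < n).
  Row r_(i+1) is Inl i, column c_(j+1) is Inr j.\<close>
definition matrix_struct :: "nat \<Rightarrow> nat \<Rightarrow> (nat \<Rightarrow> nat \<Rightarrow> 'f) \<Rightarrow> (nat + nat, 'f) sigF_struct" where
  "matrix_struct m n A =
     \<lparr> univ = Inl ` {..<m} \<union> Inr ` {..<n},
       predR = (\<lambda>x. x \<in> Inl ` {..<m}),
       predC = (\<lambda>x. x \<in> Inr ` {..<n}),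
       entry = (\<lambda>\<alpha> x y. \<exists>i j. i < m \<and> j < n \<and> x = Inl i \<and> y = Inr j \<and> A i j = \<alpha>) \<rparr>"

datatype ('f,'s) cmso =
    AtR nat
  | AtC nat
  | AtEntry 'f nat nat
  | AtEq nat nat
  | AtMem nat 's
  | AtMod nat nat 's
  | Neg "('f,'s) cmso"
  | Conj "('f,'s) cmso" "('f,'s) cmso"
  | Disj "('f,'s) cmso" "('f,'s) cmso"
  | ExFO nat "('f,'s) cmso"
  | AllFO nat "('f,'s) cmso"
  | ExSO 's "('f,'s) cmso"
  | AllSO 's "('f,'s) cmso"

fun sat :: "('u,'f) sigF_struct \<Rightarrow> (nat \<Rightarrow> 'u) \<Rightarrow> ('s \<Rightarrow> 'u set) \<Rightarrow> ('f,'s) cmso \<Rightarrow> bool" where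
  "sat S \<nu> \<sigma> (AtR x) = predR S (\<nu> x)"
| "sat S \<nu> \<sigma> (AtC x) = predC S (\<nu> x)"
| "sat S \<nu> \<sigma> (AtEntry \<alpha> x y) = entry S \<alpha> (\<nu> x) (\<nu> y)"
| "sat S \<nu> \<sigma> (AtEq x y) = (\<nu> x = \<nu> y)"
| "sat S \<nu> \<sigma> (AtMem x X) = (\<nu> x \<in> \<sigma> X)"
| "sat S \<nu> \<sigma> (AtMod a b X) = (card (\<sigma> X) mod b = a mod b)"
| "sat S \<nu> \<sigma> (Neg \<phi>) = (\<not> sat S \<nu> \<sigma> \<phi>)"
| "sat S \<nu> \<sigma> (Conj \<phi> \<psi>) = (sat S \<nu> \<sigma> \<phi> \<and> sat S \<nu> \<sigma> \<psi>)"
| "sat S \<nu> \<sigma> (Disj \<phi> \<psi>) = (sat S \<nu> \<sigma> \<phi> \<or> sat S \<nu> \<sigma> \<psi>)"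
| "sat S \<nu> \<sigma> (ExFO x \<phi>) = (\<exists>a\<in>univ S. sat S (\<nu>(x := a)) \<sigma> \<phi>)"
| "sat S \<nu> \<sigma> (AllFO x \<phi>) = (\<forall>a\<in>univ S. sat S (\<nu>(x := a)) \<sigma> \<phi>)"
| "sat S \<nu> \<sigma> (ExSO X \<phi>) = (\<exists>B\<subseteq>univ S. sat S \<nu> (\<sigma>(X := B)) \<phi>)"
| "sat S \<nu> \<sigma> (AllSO X \<phi>) = (\<forall>B\<subseteq>univ S. sat S \<nu> (\<sigma>(X := B)) \<phi>)"

definition virtual_column :: "nat \<Rightarrow> ('f \<Rightarrow> (nat + nat) set) \<Rightarrow> bool" where
  "virtual_column m Q \<longleftrightarrow>
     (\<forall>\<alpha> \<beta>. \<alpha> \<noteq> \<beta> \<longrightarrow> Q \<alpha> \<inter> Q \<beta> = {}) \<and> (\<Union>\<alpha>. Q \<alpha>) = Inl ` {..<m}"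

definition vc_vec :: "('f \<Rightarrow> (nat + nat) set) \<Rightarrow> nat \<Rightarrow> 'f" where
  "vc_vec Q i = (THE \<alpha>. Inl i \<in> Q \<alpha>)"

definition in_span :: "nat \<Rightarrow> (nat \<Rightarrow> 'f::field) \<Rightarrow> nat \<Rightarrow> (nat \<Rightarrow> nat \<Rightarrow> 'f) \<Rightarrow> bool" where
  "in_span m v k vs \<longleftrightarrow> (\<exists>c :: nat \<Rightarrow> 'f. \<forall>i<m. v i = (\<Sum>j\<in>{1..k}. c j * vs j i))"

end

theory Submission
  imports Defs
begin

definition TT :: "('f,'s) cmso" where "TT = AtEq 0 0"

fun BigConj :: "('f,'s) cmso list \<Rightarrow> ('f,'s) cmso" where
  "BigConj [] = TT"
| "BigConj (x # xs) = Conj x (BigConj xs)"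

fun BigDisj :: "('f,'s) cmso list \<Rightarrow> ('f,'s) cmso" where
  "BigDisj [] = Neg TT"
| "BigDisj (x # xs) = Disj x (BigDisj xs)"

lemma sat_BigConj: "sat S \<nu> \<sigma> (BigConj ps) \<longleftrightarrow> (\<forall>p\<in>set ps. sat S \<nu> \<sigma> p)"
  by (induction ps) (auto simp: TT_def)

lemma sat_BigDisj: "sat S \<nu> \<sigma> (BigDisj ps) \<longleftrightarrow> (\<exists>p\<in>set ps. sat S \<nu> \<sigma> p)"
  by (induction ps) (auto simp: TT_def)

definition Inner :: "nat \<Rightarrow> 'f list \<Rightarrow> ('f, nat \<times> 'f) cmso" where
  "Inner k as = BigConj [AtMem 0 (j, as!(j-1)). j \<leftarrow> [1..<k+1]]"

definition Psi :: "nat \<Rightarrow> 'f list \<Rightarrow> 'f list \<Rightarrow> ('f::field, nat \<times> 'f) cmso" where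
  "Psi k xs cs = AllFO 0 (BigConj [Disj (Neg (Conj (AtR 0)
      (Inner k as)))
      (AtMem 0 (0, \<Sum>j\<in>{1..k}. cs!(j-1) * as!(j-1))). as \<leftarrow> List.n_lists k xs])"

lemma vc_in:
  assumes "virtual_column m Q" "i < m"
  shows "Inl i \<in> Q (vc_vec Q i)"
proof -
  from assms have "Inl i \<in> (\<Union>\<alpha>. Q \<alpha>)" unfolding virtual_column_def by auto
  then obtain a where a: "Inl i \<in> Q a" by auto
  have "\<And>b. Inl i \<in> Q b \<Longrightarrow> b = a" using assms(1) a unfolding virtual_column_def by blast
  then have "vc_vec Q i = a" unfolding vc_vec_def using a by (rule the_equality[rotated]) 
  with a show ?thesis by simp
qed

lemma vc_eq:
  assumes "virtual_column m Q" "Inl i \<in> Q a"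
  shows "vc_vec Q i = a"
proof -
  have "\<And>b. Inl i \<in> Q b \<Longrightarrow> b = a" using assms unfolding virtual_column_def by blast
  then show ?thesis unfolding vc_vec_def using assms(2) by (rule the_equality[rotated])
qed

theorem lemma8:
  fixes k :: nat
  shows "\<exists>\<phi> :: ('f::{finite,field}, nat \<times> 'f) cmso.
    \<forall>m n (A :: nat \<Rightarrow> nat \<Rightarrow> 'f) (L :: 'f \<Rightarrow> (nat + nat) set) (J :: nat \<Rightarrow> 'f \<Rightarrow> (nat + nat) set)
       (\<nu> :: nat \<Rightarrow> nat + nat) (\<sigma> :: nat \<times> 'f \<Rightarrow> (nat + nat) set).
      virtual_column m L \<longrightarrow> (\<forall>j\<in>{1..k}. virtual_column m (J j)) \<longrightarrow>
      (\<forall>x. \<nu> x \<in> univ (matrix_struct m n A)) \<longrightarrow>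
      (\<forall>X. \<sigma> X \<subseteq> univ (matrix_struct m n A)) \<longrightarrow>
      (\<forall>\<alpha>. \<sigma> (0, \<alpha>) = L \<alpha>) \<longrightarrow>
      (\<forall>j\<in>{1..k}. \<forall>\<alpha>. \<sigma> (j, \<alpha>) = J j \<alpha>) \<longrightarrow>
      (sat (matrix_struct m n A) \<nu> \<sigma> \<phi> \<longleftrightarrow>
       in_span m (vc_vec L) k (\<lambda>j. vc_vec (J j)))"
proof -
  obtain xs :: "'f list" where xs: "set xs = UNIV" using finite_list[of "UNIV :: 'f set"] by auto
  have nl: "\<And>ys. ys \<in> set (List.n_lists k xs) \<longleftrightarrow> length ys = k"
    by (simp add: set_n_lists xs)
  show ?thesis
  proof (intro exI[of _ "BigDisj (map (Psi k xs) (List.n_lists k xs))"] allI impI)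
    fix m n :: nat and A :: "nat \<Rightarrow> nat \<Rightarrow> 'f" and L :: "'f \<Rightarrow> (nat + nat) set"
      and J :: "nat \<Rightarrow> 'f \<Rightarrow> (nat + nat) set" and \<nu> :: "nat \<Rightarrow> nat + nat"
      and \<sigma> :: "nat \<times> 'f \<Rightarrow> (nat + nat) set"
    assume vL: "virtual_column m L" and vJ: "\<forall>j\<in>{1..k}. virtual_column m (J j)"
      and s0: "\<forall>\<alpha>. \<sigma> (0, \<alpha>) = L \<alpha>" and sj: "\<forall>j\<in>{1..k}. \<forall>\<alpha>. \<sigma> (j, \<alpha>) = J j \<alpha>"
    let ?S = "matrix_struct m n A"
    have key: "sat ?S \<nu> \<sigma> (Psi k xs cs) \<longleftrightarrow>
      (\<forall>i<m. \<forall>as. length as = k \<longrightarrow> (\<forall>j\<in>{1..k}. Inl i \<in> J j (as!(j-1))) \<longrightarrow>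
         Inl i \<in> L (\<Sum>j\<in>{1..k}. cs!(j-1) * as!(j-1)))" (is "_ \<longleftrightarrow> ?rhs") for cs
    proof -
      have inner: "sat ?S \<nu>' \<sigma> (Inner k as) \<longleftrightarrow>
          (\<forall>j\<in>{1..k}. \<nu>' 0 \<in> J j (as!(j-1)))" for \<nu>' as
        proof -
        have "set [1..<k+1] = {1..k}" by auto
        then show ?thesis using sj unfolding Inner_def by (simp only: sat_BigConj set_map) auto
      qed
      have A: "sat ?S \<nu> \<sigma> (Psi k xs cs) \<longleftrightarrow> (\<forall>x\<in>univ ?S. \<forall>as\<in>set (List.n_lists k xs).
           \<not> (predR ?S x \<and> (\<forall>j\<in>{1..k}. x \<in> J j (as!(j-1)))) \<or>
           x \<in> \<sigma> (0, \<Sum>j\<in>{1..k}. cs!(j-1) * as!(j-1)))"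
        unfolding Psi_def sat.simps sat_BigConj set_map by (simp add: inner)
      show ?thesis
      proof
        assume H: "sat ?S \<nu> \<sigma> (Psi k xs cs)"
        show ?rhs
        proof (intro allI impI)
          fix i as assume i: "i < m" and la: "length as = k"
            and h: "\<forall>j\<in>{1..k}. Inl i \<in> J j (as!(j-1))"
          have u: "Inl i \<in> univ ?S" "predR ?S (Inl i)" using i by (auto simp: matrix_struct_def)
          have "as \<in> set (List.n_lists k xs)" using nl la by simp
          then have "\<not> (predR ?S (Inl i) \<and> (\<forall>j\<in>{1..k}. Inl i \<in> J j (as!(j-1)))) \<or>
             Inl i \<in> \<sigma> (0, \<Sum>j\<in>{1..k}. cs!(j-1) * as!(j-1))"
            by (rule bspec[OF bspec[OF H[unfolded A] u(1)]])
          then have "Inl i \<in> \<sigma> (0, \<Sum>j\<in>{1..k}. cs!(j-1) * as!(j-1))"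
            using u(2) h by (simp only: de_Morgan_conj not_not simp_thms) blast
          then show "Inl i \<in> L (\<Sum>j\<in>{1..k}. cs!(j-1) * as!(j-1))" using s0 by simp
        qed
      next
        assume R: ?rhs
        show "sat ?S \<nu> \<sigma> (Psi k xs cs)" unfolding A
        proof (intro ballI)
          fix x as assume "x \<in> univ ?S" and as: "as \<in> set (List.n_lists k xs)"
          show "\<not> (predR ?S x \<and> (\<forall>j\<in>{1..k}. x \<in> J j (as!(j-1)))) \<or>
             x \<in> \<sigma> (0, \<Sum>j\<in>{1..k}. cs!(j-1) * as!(j-1))"
          proof (cases "predR ?S x \<and> (\<forall>j\<in>{1..k}. x \<in> J j (as!(j-1)))")
            case True
            then obtain i where i: "i < m" "x = Inl i" by (auto simp: matrix_struct_def)
            have "length as = k" using as nl by simp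
            with R i True have "x \<in> L (\<Sum>j\<in>{1..k}. cs!(j-1) * as!(j-1))" by simp
            then show ?thesis using s0 by simp
          qed simp
        qed
      qed
    qed
    show "sat ?S \<nu> \<sigma> (BigDisj (map (Psi k xs) (List.n_lists k xs))) \<longleftrightarrow>
       in_span m (vc_vec L) k (\<lambda>j. vc_vec (J j))"
    proof
      assume "sat ?S \<nu> \<sigma> (BigDisj (map (Psi k xs) (List.n_lists k xs)))"
      then obtain cs where cs: "sat ?S \<nu> \<sigma> (Psi k xs cs)"
        by (auto simp: sat_BigDisj)
      show "in_span m (vc_vec L) k (\<lambda>j. vc_vec (J j))"
        unfolding in_span_def
      proof (intro exI[of _ "\<lambda>j. cs!(j-1)"] allI impI)
        fix i assume i: "i < m"
        define as where "as = map (\<lambda>j. vc_vec (J (j+1)) i) [0..<k]"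
        have asj: "as!(j-1) = vc_vec (J j) i" if "j \<in> {1..k}" for j
          using that unfolding as_def by auto
        have "Inl i \<in> L (\<Sum>j\<in>{1..k}. cs!(j-1) * as!(j-1))"
        proof -
          have la: "length as = k" unfolding as_def by simp
          have h: "\<forall>j\<in>{1..k}. Inl i \<in> J j (as!(j-1))"
            using asj vc_in[OF _ i] vJ by simp blast
          show ?thesis using cs[unfolded key, rule_format, OF i la bspec[OF h]] .
        qed
        then have "vc_vec L i = (\<Sum>j\<in>{1..k}. cs!(j-1) * as!(j-1))" by (rule vc_eq[OF vL])
        also have "\<dots> = (\<Sum>j\<in>{1..k}. cs!(j-1) * vc_vec (J j) i)"
          by (rule sum.cong[OF refl]) (simp only: asj)
        finally show "vc_vec L i = (\<Sum>j\<in>{1..k}. cs!(j-1) * vc_vec (J j) i)" .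
      qed
    next
      assume "in_span m (vc_vec L) k (\<lambda>j. vc_vec (J j))"
      then obtain c where c: "\<forall>i<m. vc_vec L i = (\<Sum>j\<in>{1..k}. c j * vc_vec (J j) i)"
        unfolding in_span_def by auto
      define cs where "cs = map (\<lambda>j. c (j+1)) [0..<k]"
      have csj: "cs!(j-1) = c j" if "j \<in> {1..k}" for j
        using that unfolding cs_def by auto
      have "sat ?S \<nu> \<sigma> (Psi k xs cs)"
        unfolding key
      proof (intro allI impI)
        fix i as assume i: "i < m" and "length as = k"
          and h: "\<forall>j\<in>{1..k}. Inl i \<in> J j (as!(j-1))"
        have "(\<Sum>j\<in>{1..k}. cs!(j-1) * as!(j-1)) = (\<Sum>j\<in>{1..k}. c j * vc_vec (J j) i)"
        proof (rule sum.cong[OF refl])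
          fix j assume j: "j \<in> {1..k}"
          have "vc_vec (J j) i = as!(j-1)" by (rule vc_eq[OF bspec[OF vJ j] bspec[OF h j]])
          then show "cs!(j-1) * as!(j-1) = c j * vc_vec (J j) i" using csj[OF j] by simp
        qed
        also have "\<dots> = vc_vec L i" using c i by simp
        finally show "Inl i \<in> L (\<Sum>j\<in>{1..k}. cs!(j-1) * as!(j-1))"
          using vc_in[OF vL i] by simp
      qed
      moreover have "cs \<in> set (List.n_lists k xs)" using nl cs_def by simp
      ultimately show "sat ?S \<nu> \<sigma> (BigDisj (map (Psi k xs) (List.n_lists k xs)))"
        by (auto simp: sat_BigDisj)
    qed
  qed
qed

end
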